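(* Consider a multiservice loss system with $K$ call types in which every call type uses the same bandwidth $b>0$ and has the same service rate $\mu>0$: type $j$ calls arrive as a Poisson process of rate $\lambda_j>0$, have exponential holding times of rate $\mu$, and blocking a type-$j$ call costs $\omega_j\ge0$. The link has capacity $C$ with $M=\lfloor C/b\rfloor\ge1$, and a call of any type is accepted iff the current total used capacity $b\sum_k q_k$ is at most $C-b$. Thus the admitted states are $\Omega=\{\bar q\in\mathbb{Z}_{\ge0}^K: |\bar q|\le M\}$, where $|\bar q|=\sum_{k=1}^K q_k$, and the set of accepted types in state $\bar q$ is $R_{\bar q}=\{1,\dots,K\}$ if $|\bar q|<M$ and $R_{\bar q}=\emptyset$ if $|\bar q|=M$. Let $\pi_{\bar q}=G^{-1}\prod_{j=1}^K\frac{(\lambda_j/\mu)^{q_j}}{q_j!}$ for $\bar q\in\Omega$ with $G$ the normalizing constant, let $r_{\bar q}=\sum_{j\notin R_{\bar q}}\omega_j\lambda_j$, $g=\sum_{\bar q\in\Omega}r_{\bar q}\pi_{\bar q}$, and $\rho=\sum_{k=1}^K\lambda_k/\mu$. Define for $\bar q\in\Omega$, with $q=|\bar q|$, $$v(\bar q)=\frac{g}{\mu\rho}\sum_{i=1}^{q}\sum_{m=0}^{q-i}\frac{(q-i)!}{(q-i-m)!}\rho^{-m}.$$ Then $v$ satisfies Howard's equation: for every $\bar q\in\Omega$, $$\sum_{j\in R_{\bar q}}\lambda_j\big(v(\bar q+e_j)-v(\bar q)\big)-\sum_{j=1}^K\mu q_j\big(v(\bar q)-v(\bar q-e_j)\big)=g-r_{\bar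 q},$$ where $e_j$ is the $j$-th unit vector and terms with $q_j=0$ in the second sum are $0$. *)

theory Defs
  imports Complex_Main
begin

text \<open>Call types are indexed by 1..K; a state is a function q :: nat => nat
  vanishing outside 1..K (q j = number of type-j calls in progress).\<close>

definition qsize :: "nat \<Rightarrow> (nat \<Rightarrow> nat) \<Rightarrow> nat" where
  "qsize K q = (\<Sum>k=1..K. q k)"

definition Omega :: "nat \<Rightarrow> nat \<Rightarrow> (nat \<Rightarrow> nat) set" where
  "Omega K M = {q. (\<forall>j. j \<notin> {1..K} \<longrightarrow> q j = 0) \<and> qsize K q \<le> M}"

definition accepted :: "nat \<Rightarrow> nat \<Rightarrow> (nat \<Rightarrow> nat) \<Rightarrow> nat set" where
  "accepted K M q = (if qsize K q < M then {1..K} else {})"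

definition unnorm_weight :: "nat \<Rightarrow> (nat \<Rightarrow> real) \<Rightarrow> real \<Rightarrow> (nat \<Rightarrow> nat) \<Rightarrow> real" where
  "unnorm_weight K lam mu q = (\<Prod>j=1..K. (lam j / mu) ^ q j / fact (q j))"

definition normG :: "nat \<Rightarrow> nat \<Rightarrow> (nat \<Rightarrow> real) \<Rightarrow> real \<Rightarrow> real" where
  "normG K M lam mu = (\<Sum>q\<in>Omega K M. unnorm_weight K lam mu q)"

definition stat_dist :: "nat \<Rightarrow> nat \<Rightarrow> (nat \<Rightarrow> real) \<Rightarrow> real \<Rightarrow> (nat \<Rightarrow> nat) \<Rightarrow> real" where
  "stat_dist K M lam mu q = unnorm_weight K lam mu q / normG K M lam mu"

definition cost_rate :: "nat \<Rightarrow> nat \<Rightarrow> (nat \<Rightarrow> real) \<Rightarrow> (nat \<Rightarrow> real) \<Rightarrow> (nat \<Rightarrow> nat) \<Rightarrow> real" where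
  "cost_rate K M lam om q = (\<Sum>j\<in>{1..K} - accepted K M q. om j * lam j)"

definition gain :: "nat \<Rightarrow> nat \<Rightarrow> (nat \<Rightarrow> real) \<Rightarrow> (nat \<Rightarrow> real) \<Rightarrow> real \<Rightarrow> real" where
  "gain K M lam om mu = (\<Sum>q\<in>Omega K M. cost_rate K M lam om q * stat_dist K M lam mu q)"

definition load :: "nat \<Rightarrow> (nat \<Rightarrow> real) \<Rightarrow> real \<Rightarrow> real" where
  "load K lam mu = (\<Sum>k=1..K. lam k / mu)"

definition relval :: "nat \<Rightarrow> nat \<Rightarrow> (nat \<Rightarrow> real) \<Rightarrow> (nat \<Rightarrow> real) \<Rightarrow> real \<Rightarrow> (nat \<Rightarrow> nat) \<Rightarrow> real" where
  "relval K M lam om mu q =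
     (let n = qsize K q; \<rho> = load K lam mu in
      gain K M lam om mu / (mu * \<rho>) *
      (\<Sum>i=1..n. \<Sum>m=0..n-i. fact (n-i) / fact (n-i-m) * inverse (\<rho> ^ m)))"

end

theory Submission
  imports Defs
begin

definition Qn :: "nat \<Rightarrow> nat \<Rightarrow> (nat \<Rightarrow> nat) set" where
  "Qn K n = {q. (\<forall>j. j \<notin> {1..K} \<longrightarrow> q j = 0) \<and> qsize K q = n}"

lemma le_qsize: "j \<in> {1..K} \<Longrightarrow> q j \<le> qsize K q"
  unfolding qsize_def by (rule member_le_sum) auto

lemma finite_Qn: "finite (Qn K n)"
proof -
  have "Qn K n \<subseteq> {f. \<forall>x. (x \<in> {1..K} \<longrightarrow> f x \<in> {0..n}) \<and> (x \<notin> {1..K} \<longrightarrow> f x = 0)}"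
    unfolding Qn_def using le_qsize by fastforce
  moreover have "finite {f. \<forall>x. (x \<in> {1..K} \<longrightarrow> f x \<in> {0..n}) \<and> (x \<notin> {1..K} \<longrightarrow> f x = (0::nat))}"
    by (rule finite_set_of_finite_funs) auto
  ultimately show ?thesis by (rule finite_subset)
qed

lemma qsize_upd_out: "j \<notin> {1..K} \<Longrightarrow> qsize K (q(j := x)) = qsize K q"
  unfolding qsize_def by (intro sum.cong) auto

lemma binom_fact_sum:
  fixes a b :: real
  shows "(\<Sum>k=0..n. a^k / fact k * (b^(n-k) / fact (n-k))) = (a+b)^n / fact n"
proof -
  have "(a+b)^n / fact n = (\<Sum>k\<le>n. (of_nat (n choose k)) * a^k * b^(n-k)) / fact n"
    by (simp add: binomial_ring)
  also have "\<dots> = (\<Sum>k\<le>n. (of_nat (n choose k)) * a^k * b^(n-k) / fact n)"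
    by (simp add: sum_divide_distrib)
  also have "\<dots> = (\<Sum>k=0..n. a^k / fact k * (b^(n-k) / fact (n-k)))"
    by (intro sum.cong) (auto simp: binomial_fact field_simps)
  finally show ?thesis by simp
qed

lemma multinom:
  fixes x :: "nat \<Rightarrow> real"
  shows "(\<Sum>q\<in>Qn K n. \<Prod>j=1..K. x j ^ q j / fact (q j)) = (\<Sum>j=1..K. x j)^n / fact n"
proof (induction K arbitrary: n)
  case 0
  show ?case
  proof (cases "n = 0")
    case True
    then have "Qn 0 n = {\<lambda>_. 0}" unfolding Qn_def qsize_def by auto
    then show ?thesis using True by simp
  next
    case False
    then have "Qn 0 n = {}" unfolding Qn_def qsize_def by auto
    then show ?thesis using False by simp
  qed
next
  case (Suc K)
  let ?F = "\<lambda>K q. \<Prod>j=1..K. x j ^ q j / fact (q j)"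
  let ?s = "\<Sum>j=1..K. x j"
  have "(\<Sum>q\<in>Qn (Suc K) n. ?F (Suc K) q)
     = (\<Sum>k\<in>{0..n}. \<Sum>q\<in>{q. q \<in> Qn (Suc K) n \<and> q (Suc K) = k}. ?F (Suc K) q)"
  proof (rule sum.group[symmetric])
    show "finite (Qn (Suc K) n)" by (rule finite_Qn)
    show "(\<lambda>q. q (Suc K)) ` Qn (Suc K) n \<subseteq> {0..n}"
      using le_qsize[of "Suc K" "Suc K"] unfolding Qn_def by auto
  qed simp
  also have "\<dots> = (\<Sum>k\<in>{0..n}. x (Suc K)^k / fact k * (?s^(n-k) / fact (n-k)))"
  proof (rule sum.cong[OF refl])
    fix k assume k: "k \<in> {0..n}"
    have img: "{q. q \<in> Qn (Suc K) n \<and> q (Suc K) = k} = (\<lambda>q. q(Suc K := k)) ` Qn K (n-k)"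
    proof (intro equalityI subsetI)
      fix q assume q: "q \<in> {q. q \<in> Qn (Suc K) n \<and> q (Suc K) = k}"
      have qs: "qsize (Suc K) q = qsize K q + k" using q unfolding Qn_def qsize_def by simp
      have "q(Suc K := 0) \<in> Qn K (n-k)"
        using q qs qsize_upd_out[of "Suc K" K q 0] unfolding Qn_def by auto
      moreover have "q = (q(Suc K := 0))(Suc K := k)" using q by auto
      ultimately show "q \<in> (\<lambda>q. q(Suc K := k)) ` Qn K (n-k)" by blast
    next
      fix q' assume "q' \<in> (\<lambda>q. q(Suc K := k)) ` Qn K (n-k)"
      then obtain q where q: "q \<in> Qn K (n-k)" and q': "q' = q(Suc K := k)" by blast
      have "qsize (Suc K) q' = qsize K q' + k" using q' unfolding qsize_def by simp
      also have "qsize K q' = qsize K q" using q' qsize_upd_out[of "Suc K" K q k] by simp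
      finally have e: "qsize (Suc K) q' = qsize K q + k" .
      have "qsize K q = n - k" using q unfolding Qn_def by simp
      with e k have s: "qsize (Suc K) q' = n" by simp
      moreover have "\<forall>j. j \<notin> {1..Suc K} \<longrightarrow> q' j = 0" using q q' unfolding Qn_def by auto
      moreover have "q' (Suc K) = k" using q' by simp
      ultimately show "q' \<in> {q. q \<in> Qn (Suc K) n \<and> q (Suc K) = k}"
        unfolding Qn_def by blast
    qed
    have inj: "inj_on (\<lambda>q. q(Suc K := k)) (Qn K (n-k))"
    proof (rule inj_onI)
      fix q1 q2 assume "q1 \<in> Qn K (n-k)" "q2 \<in> Qn K (n-k)" "q1(Suc K := k) = q2(Suc K := k)"
      then have z: "q1 (Suc K) = 0" "q2 (Suc K) = 0" and e: "q1(Suc K := k) = q2(Suc K := k)" unfolding Qn_def by auto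
      show "q1 = q2"
      proof
        fix i show "q1 i = q2 i"
        proof (cases "i = Suc K")
          case False then show ?thesis using fun_cong[OF e, of i] by simp
        qed (use z in simp)
      qed
    qed
    have "(\<Sum>q\<in>{q. q \<in> Qn (Suc K) n \<and> q (Suc K) = k}. ?F (Suc K) q)
        = (\<Sum>q\<in>Qn K (n-k). ?F (Suc K) (q(Suc K := k)))"
      unfolding img by (rule sum.reindex[OF inj, unfolded comp_def])
    also have "\<dots> = (\<Sum>q\<in>Qn K (n-k). x (Suc K)^k / fact k * ?F K q)"
    proof (rule sum.cong[OF refl])
      fix q assume "q \<in> Qn K (n-k)"
      have "?F K (q(Suc K := k)) = ?F K q" by (intro prod.cong) auto
      then show "?F (Suc K) (q(Suc K := k)) = x (Suc K)^k / fact k * ?F K q" by simp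
    qed
    also have "\<dots> = x (Suc K)^k / fact k * (?s^(n-k) / fact (n-k))"
      by (subst sum_distrib_left[symmetric]) (simp only: Suc.IH)
    finally show "(\<Sum>q\<in>{q. q \<in> Qn (Suc K) n \<and> q (Suc K) = k}. ?F (Suc K) q)
        = x (Suc K)^k / fact k * (?s^(n-k) / fact (n-k))" .
  qed
  also have "\<dots> = (x (Suc K) + ?s)^n / fact n" by (rule binom_fact_sum)
  also have "\<dots> = (\<Sum>j=1..Suc K. x j)^n / fact n" by (simp add: add.commute)
  finally show ?case .
qed


definition AA :: "real \<Rightarrow> nat \<Rightarrow> real" where
  "AA r n = (\<Sum>m=0..n. fact n / fact (n-m) * inverse (r ^ m))"

lemma AA_0: "AA r 0 = 1" by (simp add: AA_def)

lemma AA_Suc: assumes "r \<noteq> 0" shows "AA r (Suc n) = 1 + (real (Suc n) / r) * AA r n"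
proof -
  have "AA r (Suc n) = 1 + (\<Sum>m=0..n. fact (Suc n) / fact (Suc n - Suc m) * inverse (r ^ Suc m))"
    unfolding AA_def by (subst sum.atLeast0_atMost_Suc_shift) simp
  also have "(\<Sum>m=0..n. fact (Suc n) / fact (Suc n - Suc m) * inverse (r ^ Suc m))
      = (\<Sum>m=0..n. (real (Suc n) / r) * (fact n / fact (n-m) * inverse (r ^ m)))"
    by (intro sum.cong refl) (simp add: field_simps)
  also have "\<dots> = (real (Suc n) / r) * AA r n" unfolding AA_def by (simp add: sum_distrib_left)
  finally show ?thesis .
qed

lemma AA_closed: assumes "r \<noteq> 0" shows "AA r n = fact n / r ^ n * (\<Sum>k=0..n. r^k / fact k)"
proof (induction n)
  case 0 then show ?case by (simp add: AA_0)
next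
  case (Suc n)
  have "AA r (Suc n) = 1 + (real (Suc n) / r) * (fact n / r ^ n * (\<Sum>k=0..n. r^k / fact k))"
    using AA_Suc[OF assms] Suc by simp
  also have "\<dots> = fact (Suc n) / r ^ Suc n * (\<Sum>k=0..n. r^k / fact k) + fact (Suc n) / r ^ Suc n * (r ^ Suc n / fact (Suc n))"
  proof -
    have h: "fact (Suc n) / r ^ Suc n = real (Suc n) / r * (fact n / r ^ n)" using assms by (simp add: field_simps)
    have h2: "fact (Suc n) / r ^ Suc n * (r ^ Suc n / fact (Suc n)) = (1::real)" using assms by simp
    show ?thesis unfolding h2 unfolding h by simp
  qed
  also have "\<dots> = fact (Suc n) / r ^ Suc n * (\<Sum>k=0..Suc n. r^k / fact k)"
    by (simp add: distrib_left)
  finally show ?case .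
qed

lemma sum_rev_AA: fixes n :: nat shows "(\<Sum>i=1..n. f (n-i)) = (\<Sum>k<n. f k :: real)"
proof -
  have "(\<Sum>i=1..n. f (n-i)) = (\<Sum>i<n. f (n - Suc i))"
    by (simp add: sum.atLeast1_atMost_eq)
  also have "\<dots> = (\<Sum>k<n. f k)" by (rule sum.nat_diff_reindex)
  finally show ?thesis .
qed

lemma relval_eq: "relval K M lam om mu q =
   gain K M lam om mu / (mu * load K lam mu) * (\<Sum>k<qsize K q. AA (load K lam mu) k)"
  unfolding relval_def Let_def AA_def[symmetric] sum_rev_AA ..

lemma qsize_upd: assumes "j \<in> {1..K}"
  shows "qsize K (q(j := x)) + q j = qsize K q + x"
proof -
  have "qsize K (q(j := x)) = x + (\<Sum>k\<in>{1..K} - {j}. q k)"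
    unfolding qsize_def using assms by (subst sum.remove[of _ j]) (auto intro!: sum.cong)
  moreover have "qsize K q = q j + (\<Sum>k\<in>{1..K} - {j}. q k)"
    unfolding qsize_def using assms by (subst sum.remove[of _ j]) auto
  ultimately show ?thesis by simp
qed

lemma Omega_eq: "Omega K M = (\<Union>n\<in>{0..M}. Qn K n)"
  unfolding Omega_def Qn_def by auto

lemma sum_Omega: "(\<Sum>q\<in>Omega K M. f q) = (\<Sum>n=0..M. \<Sum>q\<in>Qn K n. f q :: real)"
proof -
  have fin: "finite (Omega K M)" unfolding Omega_eq by (auto intro: finite_Qn)
  have "(\<Sum>q\<in>Omega K M. f q) = (\<Sum>n\<in>{0..M}. \<Sum>q\<in>{q. q \<in> Omega K M \<and> qsize K q = n}. f q)"
    by (rule sum.group[symmetric]) (use fin in \<open>auto simp: Omega_def\<close>)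
  also have "\<dots> = (\<Sum>n=0..M. \<Sum>q\<in>Qn K n. f q)"
    by (intro sum.cong refl) (auto simp: Omega_def Qn_def)
  finally show ?thesis .
qed

lemma normG_eq: "normG K M lam mu = (\<Sum>n=0..M. load K lam mu ^ n / fact n)"
  unfolding normG_def sum_Omega unnorm_weight_def multinom load_def ..


lemma cost_rate_eq: "cost_rate K M lam om q = (if qsize K q < M then 0 else (\<Sum>j=1..K. om j * lam j))"
  unfolding cost_rate_def accepted_def by simp

lemma gain_eq:
  assumes "normG K M lam mu \<noteq> 0"
  shows "gain K M lam om mu = (\<Sum>j=1..K. om j * lam j) * (load K lam mu ^ M / fact M) / normG K M lam mu"
proof -
  let ?W = "\<Sum>j=1..K. om j * lam j"
  let ?G = "normG K M lam mu"
  have "gain K M lam om mu = (\<Sum>n=0..M. \<Sum>q\<in>Qn K n. cost_rate K M lam om q * stat_dist K M lam mu q)"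
    unfolding gain_def sum_Omega ..
  also have "\<dots> = (\<Sum>n=0..M. (if n < M then 0 else ?W) / ?G * (\<Sum>q\<in>Qn K n. unnorm_weight K lam mu q))"
    by (intro sum.cong refl) (auto simp: cost_rate_eq Qn_def stat_dist_def sum_distrib_left intro!: sum.cong)
  also have "\<dots> = (\<Sum>n=0..M. if n = M then ?W / ?G * (load K lam mu ^ n / fact n) else 0)"
    unfolding unnorm_weight_def multinom load_def[symmetric] by (intro sum.cong refl) auto
  also have "\<dots> = ?W / ?G * (load K lam mu ^ M / fact M)" by simp
  finally show ?thesis by simp
qed

theorem mainTheorem4:
  fixes K M :: nat and b C mu :: real and lam om :: "nat \<Rightarrow> real"
  assumes "K \<ge> 1"
    and "b > 0" and "mu > 0"
    and "\<And>j. j \<in> {1..K} \<Longrightarrow> lam j > 0"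
    and "\<And>j. j \<in> {1..K} \<Longrightarrow> om j \<ge> 0"
    and "M = nat \<lfloor>C / b\<rfloor>" and "M \<ge> 1"
    and "q \<in> Omega K M"
  shows "(\<Sum>j\<in>accepted K M q. lam j *
            (relval K M lam om mu (q(j := q j + 1)) - relval K M lam om mu q))
         - (\<Sum>j=1..K. mu * real (q j) *
            (relval K M lam om mu q - relval K M lam om mu (q(j := q j - 1))))
         = gain K M lam om mu - cost_rate K M lam om q"
proof -
  define r where "r = load K lam mu"
  define L where "L = (\<Sum>j=1..K. lam j)"
  define W where "W = (\<Sum>j=1..K. om j * lam j)"
  define g where "g = gain K M lam om mu"
  define c where "c = g / (mu * r)"
  define V where "V = (\<lambda>n. c * (\<Sum>k<n. AA r k))"
  define n where "n = qsize K q"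
  have rL: "r = L / mu" unfolding r_def L_def load_def by (simp add: sum_divide_distrib)
  have Lpos: "L > 0" unfolding L_def using assms(1,4) by (intro sum_pos) auto
  have rpos: "r > 0" using rL Lpos assms(3) by simp
  have relV: "\<And>p. relval K M lam om mu p = V (qsize K p)"
    unfolding relval_eq V_def c_def g_def r_def ..
  have VS: "\<And>m. V (Suc m) - V m = c * AA r m" unfolding V_def by (simp add: algebra_simps)
  have nM: "n \<le> M" and qout: "\<And>j. j \<notin> {1..K} \<Longrightarrow> q j = 0"
    using assms(8) unfolding Omega_def n_def by auto
  have Gpos: "normG K M lam mu > 0"
    unfolding normG_eq r_def[symmetric] using rpos by (intro sum_pos) auto
  have gW: "g = W * (r ^ M / fact M) / (\<Sum>k=0..M. r^k / fact k)"
    unfolding g_def W_def r_def using gain_eq[of K M lam mu om] Gpos by (simp add: normG_eq)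
  have S2: "(\<Sum>j=1..K. mu * real (q j) * (relval K M lam om mu q - relval K M lam om mu (q(j := q j - 1))))
      = mu * c * AA r (n - 1) * real n"
  proof -
    have "(\<Sum>j=1..K. mu * real (q j) * (relval K M lam om mu q - relval K M lam om mu (q(j := q j - 1))))
        = (\<Sum>j=1..K. mu * c * AA r (n - 1) * real (q j))"
    proof (intro sum.cong refl)
      fix j assume j: "j \<in> {1..K}"
      show "mu * real (q j) * (relval K M lam om mu q - relval K M lam om mu (q(j := q j - 1)))
          = mu * c * AA r (n - 1) * real (q j)"
      proof (cases "q j = 0")
        case False
        have "qsize K (q(j := q j - 1)) + q j = n + (q j - 1)" using qsize_upd[OF j] n_def by simp
        then have e: "qsize K (q(j := q j - 1)) = n - 1" and n1: "n = Suc (n - 1)" using False by auto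
        have "V n - V (n - 1) = c * AA r (n - 1)" using VS[of "n-1"] n1 by simp
        then show ?thesis unfolding relV e n_def[symmetric] by simp
      qed simp
    qed
    also have "\<dots> = mu * c * AA r (n - 1) * real n"
      unfolding sum_distrib_left[symmetric] n_def qsize_def by simp
    finally show ?thesis .
  qed
  show ?thesis
  proof (cases "n < M")
    case True
    have acc: "accepted K M q = {1..K}" using True unfolding accepted_def n_def by simp
    have "(\<Sum>j\<in>accepted K M q. lam j * (relval K M lam om mu (q(j := q j + 1)) - relval K M lam om mu q))
        = (\<Sum>j=1..K. lam j * (c * AA r n))"
    proof (intro sum.cong)
      fix j assume j: "j \<in> {1..K}"
      have "qsize K (q(j := q j + 1)) = Suc n" using qsize_upd[of j K q "q j + 1"] j n_def by simp
      then show "lam j * (relval K M lam om mu (q(j := q j + 1)) - relval K M lam om mu q) = lam j * (c * AA r n)"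
        unfolding relV n_def[symmetric] using VS[of n] by simp
    qed (simp add: acc)
    also have "\<dots> = L * c * AA r n" unfolding L_def by (simp add: sum_distrib_right mult.assoc)
    finally have S1: "(\<Sum>j\<in>accepted K M q. lam j * (relval K M lam om mu (q(j := q j + 1)) - relval K M lam om mu q)) = L * c * AA r n" .
    have cr: "cost_rate K M lam om q = 0" using True unfolding cost_rate_eq n_def by simp
    have Lc: "L * c = g" unfolding c_def rL using assms(3) Lpos by simp
    have muc: "mu * c = g / r" unfolding c_def using assms(3) by simp
    have "L * c * AA r n - mu * c * AA r (n - 1) * real n = g"
    proof (cases n)
      case 0 then show ?thesis using Lc by (simp add: AA_0)
    next
      case (Suc m)
      then show ?thesis unfolding Lc muc using AA_Suc[of r m] rpos by (simp add: field_simps)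
    qed
    then show ?thesis unfolding S1 S2 cr g_def by simp
  next
    case False
    then have nM': "n = M" using nM by simp
    have acc: "accepted K M q = {}" using nM' unfolding accepted_def n_def by simp
    have cr: "cost_rate K M lam om q = W" using nM' unfolding cost_rate_eq n_def W_def by simp
    have Mm: "M = Suc (M - 1)" using assms(7) by simp
    have Epos: "(\<Sum>k=0..M. r^k / fact k) > 0" using rpos by (intro sum_pos) auto
    have "g * AA r M = W" using Epos
      unfolding gW AA_closed[OF rpos[THEN less_imp_neq, symmetric]]
      using rpos by (simp add: field_simps)
    moreover have "AA r M = 1 + real M / r * AA r (M - 1)"
      using AA_Suc[of r "M - 1"] rpos Mm by simp
    ultimately have "g + g / r * real M * AA r (M - 1) = W" by (simp add: field_simps)
    moreover have "mu * c = g / r" unfolding c_def using assms(3) by simp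
    ultimately show ?thesis unfolding S2 acc cr nM' g_def[symmetric] by (simp add: field_simps)
  qed
qed

end
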